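(* Let $\kappa$ be an infinite cardinal and $\tau=\max(\kappa^+,\kappa^\omega)$. There exists a (continuous) homogeneous quadratic polynomial $P:\ell_1(\tau)\to\mathbb{C}$ which has a maximal zero subspace of density $\kappa$ and another maximal zero subspace of density $\tau$.
   Context: Banach spaces are complex. A zero subspace of $P$ is a linear subspace on which $P$ vanishes identically; it is maximal if not properly contained in another zero subspace. Density of a space means the least cardinality of a dense subset. *)

theory Defs
  imports "HOL-Analysis.Analysis"
begin

definition l1 :: "'t set \<Rightarrow> ('t \<Rightarrow> complex) set" where
  "l1 T = {x. (\<forall>i. i \<notin> T \<longrightarrow> x i = 0) \<and> (\<lambda>i. norm (x i)) summable_on T}"

definition l1norm :: "'t set \<Rightarrow> ('t \<Rightarrow> complex) \<Rightarrow> real" where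
  "l1norm T x = infsum (\<lambda>i. norm (x i)) T"

definition cont_quad_poly :: "'t set \<Rightarrow> (('t \<Rightarrow> complex) \<Rightarrow> complex) \<Rightarrow> bool" where
  "cont_quad_poly T P \<longleftrightarrow>
    (\<exists>B :: ('t \<Rightarrow> complex) \<Rightarrow> ('t \<Rightarrow> complex) \<Rightarrow> complex. \<exists>C :: real.
      (\<forall>x\<in>l1 T. \<forall>y\<in>l1 T. \<forall>z\<in>l1 T. \<forall>a b :: complex.
          B (\<lambda>i. a * x i + b * y i) z = a * B x z + b * B y z \<and>
          B z (\<lambda>i. a * x i + b * y i) = a * B z x + b * B z y) \<and>
      (\<forall>x\<in>l1 T. \<forall>y\<in>l1 T. norm (B x y) \<le> C * l1norm T x * l1norm T y) \<and>
      (\<forall>x\<in>l1 T. P x = B x x))"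

definition l1_subspace :: "'t set \<Rightarrow> ('t \<Rightarrow> complex) set \<Rightarrow> bool" where
  "l1_subspace T V \<longleftrightarrow> V \<subseteq> l1 T \<and> (\<lambda>i. 0) \<in> V \<and>
     (\<forall>x\<in>V. \<forall>y\<in>V. \<forall>a b :: complex. (\<lambda>i. a * x i + b * y i) \<in> V)"

definition zero_subspace :: "'t set \<Rightarrow> (('t \<Rightarrow> complex) \<Rightarrow> complex) \<Rightarrow> ('t \<Rightarrow> complex) set \<Rightarrow> bool" where
  "zero_subspace T P V \<longleftrightarrow> l1_subspace T V \<and> (\<forall>v\<in>V. P v = 0)"

definition maximal_zero_subspace :: "'t set \<Rightarrow> (('t \<Rightarrow> complex) \<Rightarrow> complex) \<Rightarrow> ('t \<Rightarrow> complex) set \<Rightarrow> bool" where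
  "maximal_zero_subspace T P V \<longleftrightarrow> zero_subspace T P V \<and>
     (\<forall>W. zero_subspace T P W \<and> V \<subseteq> W \<longrightarrow> W = V)"

definition l1_dense_in :: "'t set \<Rightarrow> ('t \<Rightarrow> complex) set \<Rightarrow> ('t \<Rightarrow> complex) set \<Rightarrow> bool" where
  "l1_dense_in T D V \<longleftrightarrow> D \<subseteq> V \<and>
     (\<forall>v\<in>V. \<forall>e>0. \<exists>d\<in>D. l1norm T (\<lambda>i. v i - d i) < e)"

definition has_density :: "'t set \<Rightarrow> ('t \<Rightarrow> complex) set \<Rightarrow> 'a set \<Rightarrow> bool" where
  "has_density T V A \<longleftrightarrow>
     (\<exists>D. l1_dense_in T D V \<and> (card_of D, card_of A) \<in> ordIso) \<and>
     (\<forall>D. l1_dense_in T D V \<longrightarrow> (card_of A, card_of D) \<in> ordLeq)"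

end

theory Submission
  imports Defs
begin

unbundle cardinal_syntax



definition ev :: "'t \<Rightarrow> 't \<Rightarrow> complex" where "ev a = (\<lambda>i. if i = a then 1 else 0)"

lemma l1_comb:
  assumes "x \<in> l1 T" "y \<in> l1 T"
  shows "(\<lambda>i. a * x i + b * y i) \<in> l1 T"
proof -
  have sx: "(\<lambda>i. norm (x i)) summable_on T" and sy: "(\<lambda>i. norm (y i)) summable_on T"
    using assms by (auto simp: l1_def)
  have "(\<lambda>i. norm a * norm (x i) + norm b * norm (y i)) summable_on T"
    by (intro summable_on_add summable_on_cmult_right sx sy)
  hence "(\<lambda>i. norm (a * x i + b * y i)) summable_on T"
    by (rule summable_on_comparison_test) (auto intro!: order.trans[OF norm_triangle_ineq] simp: norm_mult)
  thus ?thesis using assms by (auto simp: l1_def)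
qed

lemma l1_diff: "x \<in> l1 T \<Longrightarrow> y \<in> l1 T \<Longrightarrow> (\<lambda>i. x i - y i) \<in> l1 T"
  using l1_comb[of x T y 1 "-1"] by simp

lemma l1_abs: "x \<in> l1 T \<Longrightarrow> (\<lambda>i. norm (x i)) summable_on T"
  by (auto simp: l1_def)

lemma l1_abs_sub: "x \<in> l1 T \<Longrightarrow> A \<subseteq> T \<Longrightarrow> (\<lambda>i. norm (x i)) summable_on A"
  by (auto simp: l1_def intro: summable_on_subset_banach)

lemma l1norm_nonneg: "l1norm T x \<ge> 0"
  by (auto simp: l1norm_def intro: infsum_nonneg)

lemma l1norm_sym: "l1norm T (\<lambda>i. x i - y i) = l1norm T (\<lambda>i. y i - x i)"
  by (simp add: l1norm_def norm_minus_commute)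

lemma l1norm_tri:
  assumes "x \<in> l1 T" "y \<in> l1 T" "z \<in> l1 T"
  shows "l1norm T (\<lambda>i. x i - z i) \<le> l1norm T (\<lambda>i. x i - y i) + l1norm T (\<lambda>i. y i - z i)"
proof -
  have s1: "(\<lambda>i. norm (x i - y i)) summable_on T" "(\<lambda>i. norm (y i - z i)) summable_on T"
       "(\<lambda>i. norm (x i - z i)) summable_on T"
    using l1_diff assms l1_abs by blast+
  have "infsum (\<lambda>i. norm (x i - z i)) T \<le> infsum (\<lambda>i. norm (x i - y i) + norm (y i - z i)) T"
    by (rule infsum_mono[OF s1(3) summable_on_add[OF s1(1,2)]]) (metis diff_add_cancel add_diff_eq norm_triangle_ineq diff_diff_eq2)
  also have "\<dots> = infsum (\<lambda>i. norm (x i - y i)) T + infsum (\<lambda>i. norm (y i - z i)) T"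
    by (rule infsum_add[OF s1(1,2)])
  finally show ?thesis by (simp add: l1norm_def)
qed

lemma ev_l1: "a \<in> T \<Longrightarrow> ev a \<in> l1 T"
proof -
  assume a: "a \<in> T"
  have "(\<lambda>i. norm (ev a i)) summable_on T"
    by (rule finite_nonzero_values_imp_summable_on) (rule finite_subset[of _ "{a}"], auto simp: ev_def)
  thus ?thesis using a by (auto simp: l1_def ev_def)
qed

lemma l1norm_ev2:
  assumes "a \<in> T" "b \<in> T" "a \<noteq> b"
  shows "l1norm T (\<lambda>i. ev a i - ev b i) = 2"
proof -
  have "l1norm T (\<lambda>i. ev a i - ev b i) = infsum (\<lambda>i. norm (ev a i - ev b i)) {a,b}"
    unfolding l1norm_def by (rule infsum_cong_neutral) (use assms in \<open>auto simp: ev_def\<close>)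
  also have "\<dots> = 2" using assms by (simp add: ev_def)
  finally show ?thesis .
qed




lemma dens_lower:
  assumes VT: "V \<subseteq> l1 T" and AT: "A \<subseteq> T" and evV: "\<forall>a\<in>A. ev a \<in> V"
    and D: "l1_dense_in T D V"
  shows "|A| \<le>o |D|"
proof -
  have DV: "D \<subseteq> V" using D by (auto simp: l1_dense_in_def)
  have "\<forall>a\<in>A. \<exists>d. d \<in> D \<and> l1norm T (\<lambda>i. ev a i - d i) < 1"
    using D evV unfolding l1_dense_in_def by (meson zero_less_one)
  from bchoice[OF this] obtain f where f0: "\<forall>a\<in>A. f a \<in> D \<and> l1norm T (\<lambda>i. ev a i - f a i) < 1"
    by blast
  hence f: "\<And>a. a \<in> A \<Longrightarrow> f a \<in> D \<and> l1norm T (\<lambda>i. ev a i - f a i) < 1" by blast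
  have "inj_on f A"
  proof (rule inj_onI, rule ccontr)
    fix a b assume ab: "a \<in> A" "b \<in> A" "f a = f b" "a \<noteq> b"
    have l: "ev a \<in> l1 T" "ev b \<in> l1 T" "f a \<in> l1 T" using ab AT ev_l1[of a T] ev_l1[of b T] f[of a] DV VT by auto
    have "l1norm T (\<lambda>i. ev a i - ev b i) \<le> l1norm T (\<lambda>i. ev a i - f a i) + l1norm T (\<lambda>i. f a i - ev b i)"
      by (rule l1norm_tri[OF l(1,3,2)])
    also have "l1norm T (\<lambda>i. f a i - ev b i) = l1norm T (\<lambda>i. ev b i - f b i)"
      using l1norm_sym[of T "f a" "ev b"] ab(3) by simp
    finally have "l1norm T (\<lambda>i. ev a i - ev b i) < 2" using f[of a] f[of b] ab by simp
    thus False using l1norm_ev2[of a T b] ab AT by auto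
  qed
  moreover have "f ` A \<subseteq> D" using f by auto
  ultimately show ?thesis unfolding card_of_ordLeq[symmetric] by blast
qed

lemma dens_upper:
  assumes VT: "V \<subseteq> l1 T" and D0T: "D0 \<subseteq> l1 T"
    and appr: "\<forall>v\<in>V. \<forall>e>0. \<exists>d\<in>D0. l1norm T (\<lambda>i. v i - d i) < e"
    and inf: "infinite A" and card: "|D0| \<le>o |A|"
  shows "\<exists>D1. l1_dense_in T D1 V \<and> |D1| \<le>o |A|"
proof -
  define I where "I = {(d,n). d \<in> D0 \<and> (\<exists>v\<in>V. l1norm T (\<lambda>i. v i - d i) < 1 / real (Suc n))}"
  define g where "g = (\<lambda>(d,n::nat). SOME v. v \<in> V \<and> l1norm T (\<lambda>i. v i - d i) < 1 / real (Suc n))"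
  have g: "g (d,n) \<in> V \<and> l1norm T (\<lambda>i. g (d,n) i - d i) < 1 / real (Suc n)" if dn: "(d,n) \<in> I" for d n
  proof -
    obtain v where "v \<in> V \<and> l1norm T (\<lambda>i. v i - d i) < 1 / real (Suc n)" using dn unfolding I_def by auto
    from someI[of "\<lambda>v. v \<in> V \<and> l1norm T (\<lambda>i. v i - d i) < 1 / real (Suc n)", OF this]
    show ?thesis unfolding g_def split_conv .
  qed
  define D1 where "D1 = g ` I"
  have D1V: "D1 \<subseteq> V" using g by (auto simp: D1_def)
  have dense: "\<exists>d\<in>D1. l1norm T (\<lambda>i. v i - d i) < e" if v: "v \<in> V" and e: "e > 0" for v e
  proof -
    obtain n :: nat where n: "2 / real (Suc n) < e"
    proof -
      obtain n :: nat where n: "inverse (real (Suc n)) < e / 2" using reals_Archimedean[of "e/2"] e by auto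
      have "2 / real (Suc n) = 2 * inverse (real (Suc n))" by (simp add: divide_inverse)
      hence "2 / real (Suc n) < e" using n by linarith
      thus ?thesis by (rule that)
    qed
    obtain d where d: "d \<in> D0" "l1norm T (\<lambda>i. v i - d i) < 1 / real (Suc n)"
    proof -
      have "1 / real (Suc n) > 0" by simp
      then obtain d where "d \<in> D0" "l1norm T (\<lambda>i. v i - d i) < 1 / real (Suc n)"
        using appr v by blast
      thus ?thesis by (rule that)
    qed
    have dn: "(d,n) \<in> I" using d v unfolding I_def by auto
    have l: "v \<in> l1 T" "d \<in> l1 T" "g (d,n) \<in> l1 T" using v d(1) D0T VT g[OF dn] by auto
    have "l1norm T (\<lambda>i. v i - g (d,n) i) \<le> l1norm T (\<lambda>i. v i - d i) + l1norm T (\<lambda>i. d i - g (d,n) i)"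
      by (rule l1norm_tri[OF l])
    also have "l1norm T (\<lambda>i. d i - g (d,n) i) = l1norm T (\<lambda>i. g (d,n) i - d i)" by (rule l1norm_sym)
    finally have "l1norm T (\<lambda>i. v i - g (d,n) i) \<le> l1norm T (\<lambda>i. v i - d i) + l1norm T (\<lambda>i. g (d,n) i - d i)" .
    moreover have "l1norm T (\<lambda>i. g (d,n) i - d i) < 1 / real (Suc n)" using g[OF dn] by (rule conjunct2)
    moreover have "2 / real (Suc n) = 1 / real (Suc n) + 1 / real (Suc n)" by simp
    ultimately have "l1norm T (\<lambda>i. v i - g (d,n) i) < 2 / real (Suc n)" using d(2) by linarith
    moreover have "g (d,n) \<in> D1" using dn unfolding D1_def by (rule imageI)
    ultimately show ?thesis using n by (intro bexI[of _ "g (d,n)"]) auto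
  qed
  have "|D1| \<le>o |I|" unfolding D1_def by (rule card_of_image)
  also have "|I| \<le>o |D0 \<times> (UNIV :: nat set)|" by (rule card_of_mono1) (auto simp: I_def)
  also have "|D0 \<times> (UNIV :: nat set)| \<le>o |A \<times> (UNIV :: nat set)|" by (rule card_of_Times_mono1[OF card])
  also have "|A \<times> (UNIV :: nat set)| \<le>o |A \<times> A|"
    by (rule card_of_Times_mono2) (use inf infinite_iff_card_of_nat in blast)
  also have "|A \<times> A| \<le>o |A|" using card_of_Times_same_infinite[OF inf] unfolding ordIso_iff_ordLeq by (rule conjunct1)
  finally have "|D1| \<le>o |A|" .
  moreover have "l1_dense_in T D1 V" unfolding l1_dense_in_def using D1V dense by blast
  ultimately show ?thesis by blast
qed

lemma dens_main:
  assumes VT: "V \<subseteq> l1 T" and AT: "A \<subseteq> T" and evV: "\<forall>a\<in>A. ev a \<in> V"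
    and D0T: "D0 \<subseteq> l1 T"
    and appr: "\<forall>v\<in>V. \<forall>e>0. \<exists>d\<in>D0. l1norm T (\<lambda>i. v i - d i) < e"
    and inf: "infinite A" and card: "|D0| \<le>o |A|" and iso: "|A| =o |X|"
  shows "has_density T V X"
proof -
  obtain D1 where D1: "l1_dense_in T D1 V" "|D1| \<le>o |A|" using dens_upper[OF VT D0T appr inf card] by blast
  have "|A| \<le>o |D1|" using dens_lower[OF VT AT evV D1(1)] .
  hence "|D1| =o |A|" using D1(2) unfolding ordIso_iff_ordLeq by (intro conjI)
  hence "|D1| =o |X|" using iso by (rule ordIso_transitive)
  moreover have "|X| \<le>o |D|" if "l1_dense_in T D V" for D
    using ordIso_ordLeq_trans[OF ordIso_symmetric[OF iso] dens_lower[OF VT AT evV that]] .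
  ultimately show ?thesis unfolding has_density_def using D1(1) by blast
qed




lemma lists_len_card:
  assumes inf: "infinite X"
  shows "|{xs \<in> lists X. length xs = n}| \<le>o |X|"
proof (induction n)
  case 0
  have "{xs \<in> lists X. length xs = 0} = {[]}" by auto
  moreover have "X \<noteq> {}" using inf by auto
  ultimately show ?case using card_of_singl_ordLeq[of X "[]"] by simp
next
  case (Suc n)
  have "{xs \<in> lists X. length xs = Suc n} = (\<lambda>(x,xs). x # xs) ` (X \<times> {xs \<in> lists X. length xs = n})"
  proof (rule set_eqI, rule iffI)
    fix ys assume "ys \<in> {xs \<in> lists X. length xs = Suc n}"
    then obtain y zs where "ys = y # zs" "y \<in> X" "zs \<in> lists X" "length zs = n"
      by (cases ys) auto
    thus "ys \<in> (\<lambda>(x,xs). x # xs) ` (X \<times> {xs \<in> lists X. length xs = n})"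
      by (intro image_eqI[of _ _ "(y,zs)"]) auto
  qed auto
  hence "|{xs \<in> lists X. length xs = Suc n}| \<le>o |X \<times> {xs \<in> lists X. length xs = n}|"
    using card_of_image[of "\<lambda>(x,xs). x # xs" "X \<times> {xs \<in> lists X. length xs = n}"] by simp
  also have "|X \<times> {xs \<in> lists X. length xs = n}| \<le>o |X \<times> X|"
    by (rule card_of_Times_mono2[OF Suc.IH])
  also have "|X \<times> X| \<le>o |X|" using card_of_Times_same_infinite[OF inf] unfolding ordIso_iff_ordLeq by (rule conjunct1)
  finally show ?case .
qed

lemma lists_card:
  assumes inf: "infinite X"
  shows "|lists X| \<le>o |X|"
proof -
  have "lists X = (\<Union>n\<in>(UNIV::nat set). {xs \<in> lists X. length xs = n})" by auto
  moreover have "|\<Union>n\<in>(UNIV::nat set). {xs \<in> lists X. length xs = n}| \<le>o |X|"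
    by (rule card_of_UNION_ordLeq_infinite[OF inf]) (use inf infinite_iff_card_of_nat lists_len_card[OF inf] in blast)+
  ultimately show ?thesis by simp
qed

definition Qc :: "complex set" where "Qc = (\<lambda>(p,q). Complex (of_rat p) (of_rat q)) ` UNIV"

definition fs :: "('t \<times> complex) list \<Rightarrow> 't \<Rightarrow> complex" where
  "fs L = (\<lambda>i. case map_of L i of None \<Rightarrow> 0 | Some q \<Rightarrow> q)"

definition DD :: "'t set \<Rightarrow> ('t \<Rightarrow> complex) set" where "DD A = fs ` lists (A \<times> Qc)"

lemma Qc_card: "|Qc| \<le>o |UNIV :: nat set|"
proof -
  have "countable Qc" unfolding Qc_def by simp
  then obtain f :: "complex \<Rightarrow> nat" where "inj_on f Qc" unfolding countable_def by blast
  thus ?thesis unfolding card_of_ordLeq[symmetric] by blast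
qed

lemma Qc_dense:
  assumes e: "e > 0"
  shows "\<exists>q\<in>Qc. norm (z - q) < e"
proof -
  obtain r1 where r1: "r1 \<in> \<rat>" "Re z - e/2 < r1" "r1 < Re z + e/2"
    using Rats_dense_in_real[of "Re z - e/2" "Re z + e/2"] e by auto
  obtain r2 where r2: "r2 \<in> \<rat>" "Im z - e/2 < r2" "r2 < Im z + e/2"
    using Rats_dense_in_real[of "Im z - e/2" "Im z + e/2"] e by auto
  obtain p1 where p1: "r1 = of_rat p1" using r1(1) Rats_cases by blast
  obtain p2 where p2: "r2 = of_rat p2" using r2(1) Rats_cases by blast
  have q: "Complex r1 r2 \<in> Qc" unfolding Qc_def p1 p2 by (auto intro!: image_eqI[of _ _ "(p1,p2)"])
  have "norm (z - Complex r1 r2) \<le> \<bar>Re (z - Complex r1 r2)\<bar> + \<bar>Im (z - Complex r1 r2)\<bar>" by (rule cmod_le)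
  also have "\<dots> < e" using r1 r2 by simp
  finally show ?thesis using q by blast
qed

lemma fs_support: "L \<in> lists (A \<times> B) \<Longrightarrow> fs L i \<noteq> 0 \<Longrightarrow> i \<in> A"
  unfolding fs_def by (auto split: option.splits dest!: map_of_SomeD)

lemma fs_support_fin: "finite {i. fs L i \<noteq> 0}"
proof -
  have "{i. fs L i \<noteq> 0} \<subseteq> fst ` set L"
    unfolding fs_def by (auto split: option.splits dest!: map_of_SomeD intro: rev_image_eqI)
  thus ?thesis by (rule finite_subset) simp
qed

lemma DD_l1: "A \<subseteq> T \<Longrightarrow> DD A \<subseteq> l1 T"
proof
  fix d assume AT: "A \<subseteq> T" and "d \<in> DD A"
  then obtain L where L: "L \<in> lists (A \<times> Qc)" "d = fs L" unfolding DD_def by blast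
  have "(\<lambda>i. norm (d i)) summable_on T"
    by (rule finite_nonzero_values_imp_summable_on, rule finite_subset[OF _ fs_support_fin[of L]]) (auto simp: L)
  moreover have "\<forall>i. i \<notin> T \<longrightarrow> d i = 0" using fs_support[OF L(1)] AT L(2) by blast
  ultimately show "d \<in> l1 T" unfolding l1_def by blast
qed

lemma DD_card:
  assumes inf: "infinite A"
  shows "|DD A| \<le>o |A|"
proof -
  have ne: "Qc \<noteq> {}" unfolding Qc_def by simp
  have inf2: "infinite (A \<times> Qc)"
  proof
    assume "finite (A \<times> Qc)"
    thus False using ne inf finite_cartesian_productD1 by blast
  qed
  have "|DD A| \<le>o |lists (A \<times> Qc)|" unfolding DD_def by (rule card_of_image)
  also have "|lists (A \<times> Qc)| \<le>o |A \<times> Qc|" by (rule lists_card[OF inf2])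
  also have "|A \<times> Qc| \<le>o |A \<times> A|"
    by (rule card_of_Times_mono2, rule ordLeq_transitive[OF Qc_card]) (use inf infinite_iff_card_of_nat in blast)
  also have "|A \<times> A| \<le>o |A|" using card_of_Times_same_infinite[OF inf] unfolding ordIso_iff_ordLeq by (rule conjunct1)
  finally show ?thesis .
qed




lemma tail_small:
  fixes f :: "'a \<Rightarrow> real"
  assumes s: "f summable_on A" and e: "e > 0"
  shows "\<exists>F. finite F \<and> F \<subseteq> A \<and> infsum f (A - F) \<le> e"
proof -
  obtain F where F: "finite F" "F \<subseteq> A" "dist (sum f F) (infsum f A) \<le> e"
    using infsum_finite_approximation[OF s e] by blast
  have sF: "f summable_on F" using F(1) by simp
  have sAF: "f summable_on (A - F)" by (rule summable_on_subset_banach[OF s]) auto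
  have "infsum f A = infsum f (F \<union> (A - F))" using F(2) by (simp add: Un_absorb1)
  also have "\<dots> = infsum f F + infsum f (A - F)" by (rule infsum_Un_disjoint[OF sF sAF]) auto
  also have "infsum f F = sum f F" using F(1) by simp
  finally have "infsum f (A - F) = infsum f A - sum f F" by simp
  hence "infsum f (A - F) \<le> e" using F(3) by (simp add: dist_real_def)
  thus ?thesis using F by blast
qed

lemma DD_appr:
  assumes x: "x \<in> l1 T" and AT: "A \<subseteq> T" and xA: "\<forall>i. i \<notin> A \<longrightarrow> x i = 0" and e: "e > 0"
  shows "\<exists>d\<in>DD A. l1norm T (\<lambda>i. x i - d i) < e"
proof -
  have sA: "(\<lambda>i. norm (x i)) summable_on A" using l1_abs_sub[OF x AT] .
  obtain F where F: "finite F" "F \<subseteq> A" "infsum (\<lambda>i. norm (x i)) (A - F) \<le> e/4"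
    using tail_small[OF sA, of "e/4"] e by auto
  define \<delta> where "\<delta> = e / (4 * (real (card F) + 1))"
  have \<delta>: "\<delta> > 0" using e by (simp add: \<delta>_def)
  have "\<forall>i\<in>F. \<exists>q. q \<in> Qc \<and> norm (x i - q) < \<delta>" using Qc_dense[OF \<delta>] by blast
  from bchoice[OF this] obtain q where q: "\<forall>i\<in>F. q i \<in> Qc \<and> norm (x i - q i) < \<delta>" by blast
  obtain xs where xs: "set xs = F" using finite_list[OF F(1)] by blast
  define L where "L = map (\<lambda>i. (i, q i)) xs"
  have L: "L \<in> lists (A \<times> Qc)" using q xs F(2) unfolding L_def by auto
  have fsL: "fs L i = (if i \<in> F then q i else 0)" for i
    unfolding fs_def L_def map_of_map_restrict xs by (simp add: restrict_map_def)
  define d where "d = fs L"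
  have dD: "d \<in> DD A" unfolding d_def DD_def using L by blast
  have dl: "d \<in> l1 T" using DD_l1[OF AT] dD by blast
  have xd: "(\<lambda>i. x i - d i) \<in> l1 T" by (rule l1_diff[OF x dl])
  have s1: "(\<lambda>i. norm (x i - d i)) summable_on F" using F(1) by simp
  have s2: "(\<lambda>i. norm (x i - d i)) summable_on (T - F)"
    by (rule summable_on_subset_banach[OF l1_abs[OF xd]]) auto
  have "l1norm T (\<lambda>i. x i - d i) = infsum (\<lambda>i. norm (x i - d i)) (F \<union> (T - F))"
    unfolding l1norm_def using F(2) AT by (simp add: Un_absorb1)
  also have "\<dots> = infsum (\<lambda>i. norm (x i - d i)) F + infsum (\<lambda>i. norm (x i - d i)) (T - F)"
    by (rule infsum_Un_disjoint[OF s1 s2]) auto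
  also have "infsum (\<lambda>i. norm (x i - d i)) F = sum (\<lambda>i. norm (x i - q i)) F"
    using F(1) by (simp add: d_def fsL)
  also have "infsum (\<lambda>i. norm (x i - d i)) (T - F) = infsum (\<lambda>i. norm (x i)) (A - F)"
    by (rule infsum_cong_neutral) (use xA AT in \<open>auto simp: d_def fsL\<close>)
  also have "sum (\<lambda>i. norm (x i - q i)) F \<le> sum (\<lambda>i. \<delta>) F"
    by (rule sum_mono) (use q in \<open>auto intro: less_imp_le\<close>)
  also have "sum (\<lambda>i. \<delta>) F = real (card F) * \<delta>" by simp
  also have "real (card F) * \<delta> \<le> e / 4"
  proof -
    have "real (card F) * \<delta> = e / 4 * (real (card F) / (real (card F) + 1))"
      by (simp add: \<delta>_def field_simps)
    also have "\<dots> \<le> e / 4 * 1" using e by (intro mult_left_mono) auto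
    finally show ?thesis by simp
  qed
  finally have "l1norm T (\<lambda>i. x i - d i) \<le> e/4 + e/4" using F(3) by linarith
  hence "l1norm T (\<lambda>i. x i - d i) < e" using e by linarith
  thus ?thesis using dD by blast
qed




definition phi :: "('t \<Rightarrow> 't \<Rightarrow> complex) \<Rightarrow> 't set \<Rightarrow> ('t \<Rightarrow> complex) \<Rightarrow> 't \<Rightarrow> complex" where
  "phi M S y r = infsum (\<lambda>s. M r s * y s) S"

definition BB :: "('t \<Rightarrow> 't \<Rightarrow> complex) \<Rightarrow> 't set \<Rightarrow> 't set \<Rightarrow> ('t \<Rightarrow> complex) \<Rightarrow> ('t \<Rightarrow> complex) \<Rightarrow> complex" where
  "BB M R S x y = infsum (\<lambda>r. x r * phi M S y r) R"

lemma l1_sub_le: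
  assumes y: "y \<in> l1 T" and ST: "S \<subseteq> T"
  shows "infsum (\<lambda>i. norm (y i)) S \<le> l1norm T y"
  unfolding l1norm_def
  by (rule infsum_mono_neutral[OF l1_abs_sub[OF y ST] l1_abs[OF y]]) (use ST in auto)

locale mat =
  fixes M :: "'t \<Rightarrow> 't \<Rightarrow> complex" and R S T :: "'t set"
  assumes Mb: "\<And>r s. norm (M r s) \<le> 1" and RT: "R \<subseteq> T" and ST: "S \<subseteq> T"
begin

lemma Mle: "norm (M r s * c) \<le> norm c"
  unfolding norm_mult by (rule mult_left_le_one_le[OF norm_ge_zero norm_ge_zero Mb])

lemma phi_abs: "y \<in> l1 T \<Longrightarrow> (\<lambda>s. norm (M r s * y s)) summable_on S"
  by (rule summable_on_comparison_test[OF l1_abs_sub[OF _ ST]]) (auto intro: Mle)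

lemma phi_sum: "y \<in> l1 T \<Longrightarrow> (\<lambda>s. M r s * y s) summable_on S"
  by (rule abs_summable_summable[OF phi_abs])

lemma phi_bound:
  assumes y: "y \<in> l1 T"
  shows "norm (phi M S y r) \<le> l1norm T y"
proof -
  have "norm (phi M S y r) \<le> infsum (\<lambda>s. norm (M r s * y s)) S"
    unfolding phi_def by (rule norm_infsum_bound[OF phi_abs[OF y]])
  also have "\<dots> \<le> infsum (\<lambda>s. norm (y s)) S"
    by (rule infsum_mono[OF phi_abs[OF y] l1_abs_sub[OF y ST]])
       (rule Mle)
  also have "\<dots> \<le> l1norm T y" by (rule l1_sub_le[OF y ST])
  finally show ?thesis .
qed

lemma phi_lin:
  assumes y: "y \<in> l1 T" and z: "z \<in> l1 T"
  shows "phi M S (\<lambda>i. a * y i + b * z i) r = a * phi M S y r + b * phi M S z r"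
proof -
  have "phi M S (\<lambda>i. a * y i + b * z i) r = infsum (\<lambda>s. a * (M r s * y s) + b * (M r s * z s)) S"
    unfolding phi_def by (simp add: algebra_simps)
  also have "\<dots> = infsum (\<lambda>s. a * (M r s * y s)) S + infsum (\<lambda>s. b * (M r s * z s)) S"
    by (rule infsum_add) (intro summable_on_cmult_right phi_sum y z)+
  also have "\<dots> = a * phi M S y r + b * phi M S z r"
    unfolding phi_def by (simp add: infsum_cmult_right')
  finally show ?thesis .
qed

lemma xphi_le: assumes y: "y \<in> l1 T" shows "norm (x r * phi M S y r) \<le> l1norm T y * norm (x r)"
proof -
  have "norm (x r) * norm (phi M S y r) \<le> norm (x r) * l1norm T y"
    by (rule mult_left_mono[OF phi_bound[OF y] norm_ge_zero])
  thus ?thesis unfolding norm_mult by (simp add: mult.commute)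
qed

lemma BB_abs:
  assumes x: "x \<in> l1 T" and y: "y \<in> l1 T"
  shows "(\<lambda>r. norm (x r * phi M S y r)) summable_on R"
proof -
  have "(\<lambda>r. l1norm T y * norm (x r)) summable_on R"
    by (rule summable_on_cmult_right[OF l1_abs_sub[OF x RT]])
  thus ?thesis
    by (rule summable_on_comparison_test)
       (auto intro: xphi_le[OF y])
qed

lemma BB_sum: "x \<in> l1 T \<Longrightarrow> y \<in> l1 T \<Longrightarrow> (\<lambda>r. x r * phi M S y r) summable_on R"
  by (rule abs_summable_summable[OF BB_abs])

lemma BB_bound:
  assumes x: "x \<in> l1 T" and y: "y \<in> l1 T"
  shows "norm (BB M R S x y) \<le> 1 * l1norm T x * l1norm T y"
proof -
  have "norm (BB M R S x y) \<le> infsum (\<lambda>r. norm (x r * phi M S y r)) R"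
    unfolding BB_def by (rule norm_infsum_bound[OF BB_abs[OF x y]])
  also have "\<dots> \<le> infsum (\<lambda>r. l1norm T y * norm (x r)) R"
    by (rule infsum_mono[OF BB_abs[OF x y] summable_on_cmult_right[OF l1_abs_sub[OF x RT]]])
       (auto intro: xphi_le[OF y])
  also have "\<dots> = l1norm T y * infsum (\<lambda>r. norm (x r)) R" by (rule infsum_cmult_right')
  also have "\<dots> \<le> l1norm T y * l1norm T x"
    by (rule mult_left_mono[OF l1_sub_le[OF x RT] l1norm_nonneg])
  finally show ?thesis by (simp add: mult.commute)
qed

lemma BB_lin1:
  assumes x: "x \<in> l1 T" and y: "y \<in> l1 T" and z: "z \<in> l1 T"
  shows "BB M R S (\<lambda>i. a * x i + b * y i) z = a * BB M R S x z + b * BB M R S y z"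
proof -
  have "BB M R S (\<lambda>i. a * x i + b * y i) z = infsum (\<lambda>r. a * (x r * phi M S z r) + b * (y r * phi M S z r)) R"
    unfolding BB_def by (simp add: algebra_simps)
  also have "\<dots> = infsum (\<lambda>r. a * (x r * phi M S z r)) R + infsum (\<lambda>r. b * (y r * phi M S z r)) R"
    by (rule infsum_add) (intro summable_on_cmult_right BB_sum x y z)+
  also have "\<dots> = a * BB M R S x z + b * BB M R S y z"
    unfolding BB_def by (simp add: infsum_cmult_right')
  finally show ?thesis .
qed

lemma BB_lin2:
  assumes x: "x \<in> l1 T" and y: "y \<in> l1 T" and z: "z \<in> l1 T"
  shows "BB M R S z (\<lambda>i. a * x i + b * y i) = a * BB M R S z x + b * BB M R S z y"
proof -
  have "BB M R S z (\<lambda>i. a * x i + b * y i) = infsum (\<lambda>r. a * (z r * phi M S x r) + b * (z r * phi M S y r)) R"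
    unfolding BB_def phi_lin[OF x y] by (simp add: algebra_simps)
  also have "\<dots> = infsum (\<lambda>r. a * (z r * phi M S x r)) R + infsum (\<lambda>r. b * (z r * phi M S y r)) R"
    by (rule infsum_add) (intro summable_on_cmult_right BB_sum x y z)+
  also have "\<dots> = a * BB M R S z x + b * BB M R S z y"
    unfolding BB_def by (simp add: infsum_cmult_right')
  finally show ?thesis .
qed

lemma cqp: "cont_quad_poly T (\<lambda>x. BB M R S x x)"
  unfolding cont_quad_poly_def
  by (intro exI[of _ "BB M R S"] exI[of _ 1]) (use BB_lin1 BB_lin2 BB_bound in auto)

end




definition Mx :: "('t \<Rightarrow> ('k \<times> bool) list) \<Rightarrow> ('t \<Rightarrow> 'k set) \<Rightarrow> 't \<Rightarrow> 't \<Rightarrow> complex" where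
  "Mx \<rho> \<iota> r s = (if (\<forall>(k,b)\<in>set (\<rho> r). (k \<in> \<iota> s) = b) then 1 else 0)"

lemma separation:
  fixes x :: "'t \<Rightarrow> complex" and \<iota> :: "'t \<Rightarrow> 'k set"
  assumes inj: "inj_on \<iota> S" and iK: "\<forall>s\<in>S. \<iota> s \<subseteq> K"
    and sx: "(\<lambda>s. norm (x s)) summable_on S"
    and z: "\<forall>L \<in> lists (K \<times> UNIV). infsum (\<lambda>s. (if \<forall>(k,b)\<in>set L. (k \<in> \<iota> s) = b then 1 else 0) * x s) S = 0"
    and s0: "s0 \<in> S"
  shows "x s0 = 0"
proof (rule ccontr)
  assume nz: "x s0 \<noteq> 0"
  define m where "m = norm (x s0)"
  have m: "m > 0" using nz by (simp add: m_def)
  obtain F where F: "finite F" "F \<subseteq> S" "infsum (\<lambda>s. norm (x s)) (S - F) \<le> m/2"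
    using tail_small[OF sx, of "m/2"] m by auto
  define C where "C = insert s0 F"
  have C: "finite C" "C \<subseteq> S" "s0 \<in> C" using F s0 by (auto simp: C_def)
  have sSC: "(\<lambda>s. norm (x s)) summable_on (S - C)" by (rule summable_on_subset_banach[OF sx]) auto
  have sSF: "(\<lambda>s. norm (x s)) summable_on (S - F)" by (rule summable_on_subset_banach[OF sx]) auto
  have tailC: "infsum (\<lambda>s. norm (x s)) (S - C) \<le> m/2"
  proof -
    have "infsum (\<lambda>s. norm (x s)) (S - C) \<le> infsum (\<lambda>s. norm (x s)) (S - F)"
      by (rule infsum_mono_neutral[OF sSC sSF]) (auto simp: C_def)
    thus ?thesis using F(3) by linarith
  qed
  have "\<forall>t\<in>C - {s0}. \<exists>k. k \<in> K \<and> (k \<in> \<iota> t) \<noteq> (k \<in> \<iota> s0)"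
  proof
    fix t assume t: "t \<in> C - {s0}"
    hence "\<iota> t \<noteq> \<iota> s0" using inj C(2) s0 unfolding inj_on_def by blast
    then obtain k where "(k \<in> \<iota> t) \<noteq> (k \<in> \<iota> s0)" by blast
    moreover have "\<iota> t \<subseteq> K" "\<iota> s0 \<subseteq> K" using iK t C(2) s0 by auto
    ultimately show "\<exists>k. k \<in> K \<and> (k \<in> \<iota> t) \<noteq> (k \<in> \<iota> s0)" by blast
  qed
  from bchoice[OF this] obtain kk where kk: "\<forall>t\<in>C - {s0}. kk t \<in> K \<and> (kk t \<in> \<iota> t) \<noteq> (kk t \<in> \<iota> s0)"
    by blast
  obtain xs where xs: "set xs = kk ` (C - {s0})" using finite_list[of "kk ` (C - {s0})"] C(1) by blast
  define L where "L = map (\<lambda>k. (k, k \<in> \<iota> s0)) xs"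
  have L: "L \<in> lists (K \<times> UNIV)" using kk xs unfolding L_def by auto
  define ch where "ch = (\<lambda>s. (if \<forall>(k,b)\<in>set L. (k \<in> \<iota> s) = b then 1 else 0) :: complex)"
  have chi0: "ch s0 = 1" unfolding ch_def L_def by auto
  have chit: "ch t = 0" if t: "t \<in> C - {s0}" for t
  proof -
    have "kk t \<in> set xs" unfolding xs using t by blast
    hence "(kk t, kk t \<in> \<iota> s0) \<in> set L" unfolding L_def by auto
    moreover have "(kk t \<in> \<iota> t) \<noteq> (kk t \<in> \<iota> s0)" using kk t by blast
    ultimately show ?thesis unfolding ch_def by auto
  qed
  have nchi: "norm (ch s * x s) \<le> norm (x s)" for s by (simp add: ch_def norm_mult)
  have fsum: "(\<lambda>s. ch s * x s) summable_on S"
    by (rule abs_summable_summable, rule summable_on_comparison_test[OF sx]) (auto intro: nchi)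
  have fC: "(\<lambda>s. ch s * x s) summable_on C" using C(1) by simp
  have fSC: "(\<lambda>s. ch s * x s) summable_on (S - C)" by (rule summable_on_subset_banach[OF fsum]) auto
  have "0 = infsum (\<lambda>s. ch s * x s) S" using z L unfolding ch_def by auto
  also have "\<dots> = infsum (\<lambda>s. ch s * x s) (C \<union> (S - C))" using C(2) by (simp add: Un_absorb1)
  also have "\<dots> = infsum (\<lambda>s. ch s * x s) C + infsum (\<lambda>s. ch s * x s) (S - C)"
    by (rule infsum_Un_disjoint[OF fC fSC]) auto
  also have "infsum (\<lambda>s. ch s * x s) C = sum (\<lambda>s. ch s * x s) C" using C(1) by simp
  also have "\<dots> = ch s0 * x s0 + sum (\<lambda>s. ch s * x s) (C - {s0})"
    using C by (simp add: sum.remove)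
  also have "sum (\<lambda>s. ch s * x s) (C - {s0}) = 0" using chit by simp
  finally have eq: "x s0 = - infsum (\<lambda>s. ch s * x s) (S - C)" using chi0 by (simp add: eq_neg_iff_add_eq_0)
  have "norm (infsum (\<lambda>s. ch s * x s) (S - C)) \<le> infsum (\<lambda>s. norm (ch s * x s)) (S - C)"
    by (rule norm_infsum_bound, rule summable_on_comparison_test[OF sSC]) (auto intro: nchi)
  also have "\<dots> \<le> infsum (\<lambda>s. norm (x s)) (S - C)"
    by (rule infsum_mono[OF _ sSC], rule summable_on_comparison_test[OF sSC]) (auto intro: nchi)
  finally have le: "norm (infsum (\<lambda>s. ch s * x s) (S - C)) \<le> infsum (\<lambda>s. norm (x s)) (S - C)" .
  have "m = norm (infsum (\<lambda>s. ch s * x s) (S - C))" unfolding m_def eq by (rule norm_minus_cancel)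
  hence "m \<le> m/2" using le tailC by linarith
  thus False using m by simp
qed




locale constr =
  fixes K :: "'k set" and T R S :: "'t set" and \<rho> :: "'t \<Rightarrow> ('k \<times> bool) list" and \<iota> :: "'t \<Rightarrow> 'k set"
  assumes RT: "R \<subseteq> T" and Sdef: "S = T - R" and inj: "inj_on \<iota> S" and iK: "\<forall>s\<in>S. \<iota> s \<subseteq> K"
    and surj: "\<forall>L\<in>lists (K \<times> UNIV). \<exists>r\<in>R. \<rho> r = L"
begin

abbreviation "MM \<equiv> Mx \<rho> \<iota>"
abbreviation "PP \<equiv> (\<lambda>x. BB MM R S x x)"

lemma ST: "S \<subseteq> T" using Sdef by auto
lemma RS: "R \<inter> S = {}" using Sdef by auto

sublocale mat MM R S T
  by unfold_locales (auto simp: Mx_def RT ST)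

definition "VR = {x \<in> l1 T. \<forall>s\<in>S. x s = 0}"
definition "VS = {x \<in> l1 T. \<forall>r\<in>R. x r = 0}"

lemma l1_zero: "(\<lambda>i. 0 :: complex) \<in> l1 T" by (simp add: l1_def)

lemma VR_sub: "l1_subspace T VR"
  unfolding l1_subspace_def VR_def using l1_zero l1_comb by auto

lemma VS_sub: "l1_subspace T VS"
  unfolding l1_subspace_def VS_def using l1_zero l1_comb by auto

lemma phi_zero: "\<forall>s\<in>S. v s = 0 \<Longrightarrow> phi MM S v r = 0"
  unfolding phi_def by (simp add: infsum_0)

lemma VR_zero: "zero_subspace T PP VR"
  unfolding zero_subspace_def using VR_sub by (auto simp: VR_def BB_def phi_zero)

lemma VS_zero: "zero_subspace T PP VS"
  unfolding zero_subspace_def using VS_sub by (auto simp: VS_def BB_def intro!: infsum_0)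

lemma VR_max: "maximal_zero_subspace T PP VR"
  unfolding maximal_zero_subspace_def
proof (intro conjI VR_zero allI impI)
  fix W assume W: "zero_subspace T PP W \<and> VR \<subseteq> W"
  have Wl: "W \<subseteq> l1 T" and Wc: "\<forall>x\<in>W. \<forall>y\<in>W. \<forall>a b. (\<lambda>i. a * x i + b * y i) \<in> W"
    and W0: "\<forall>v\<in>W. PP v = 0" and VRW: "VR \<subseteq> W"
    using W unfolding zero_subspace_def l1_subspace_def by auto
  show "W = VR"
  proof
    show "W \<subseteq> VR"
    proof
      fix w assume w: "w \<in> W"
      have wl: "w \<in> l1 T" using w Wl by auto
      have phiw: "phi MM S w r = 0" if r: "r \<in> R" for r
      proof -
        have er: "ev r \<in> VR" unfolding VR_def using ev_l1[of r T] r RT RS by (auto simp: ev_def)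
        have erl: "ev r \<in> l1 T" using ev_l1[of r T] r RT by auto
        define u where "u = (\<lambda>i. 1 * ev r i + 1 * w i)"
        have uW: "u \<in> W" unfolding u_def using Wc er VRW w by blast
        have ul: "u \<in> l1 T" unfolding u_def by (rule l1_comb[OF erl wl])
        have phieq: "phi MM S u r' = phi MM S w r'" for r'
        proof -
          have "phi MM S u r' = 1 * phi MM S (ev r) r' + 1 * phi MM S w r'"
            unfolding u_def by (rule phi_lin[OF erl wl])
          moreover have "phi MM S (ev r) r' = 0" by (rule phi_zero) (use r RS in \<open>auto simp: ev_def\<close>)
          ultimately show ?thesis by simp
        qed
        have "0 = PP u" using W0 uW by auto
        also have "PP u = 1 * BB MM R S (ev r) u + 1 * BB MM R S w u"
          using BB_lin1[OF erl wl ul, of 1 1] by (simp only: u_def[symmetric])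
        also have "BB MM R S (ev r) u = phi MM S w r"
        proof -
          have "BB MM R S (ev r) u = infsum (\<lambda>r'. ev r r' * phi MM S u r') {r}"
            unfolding BB_def by (rule infsum_cong_neutral) (use r in \<open>auto simp: ev_def\<close>)
          thus ?thesis by (simp add: ev_def phieq)
        qed
        also have "BB MM R S w u = PP w" unfolding BB_def phieq ..
        also have "PP w = 0" using W0 w by auto
        finally show ?thesis by simp
      qed
      have "w s = 0" if s: "s \<in> S" for s
      proof (rule separation[OF inj iK l1_abs_sub[OF wl ST] _ s])
        show "\<forall>L\<in>lists (K \<times> UNIV). infsum (\<lambda>s. (if \<forall>(k,b)\<in>set L. (k \<in> \<iota> s) = b then 1 else 0) * w s) S = 0"
        proof
          fix L assume "L \<in> lists (K \<times> (UNIV :: bool set))"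
          then obtain r where r: "r \<in> R" "\<rho> r = L" using surj by blast
          show "infsum (\<lambda>s. (if \<forall>(k,b)\<in>set L. (k \<in> \<iota> s) = b then 1 else 0) * w s) S = 0"
            using phiw[OF r(1)] unfolding phi_def Mx_def r(2) .
        qed
      qed
      thus "w \<in> VR" unfolding VR_def using wl by auto
    qed
  qed (use VRW in auto)
qed

lemma W_exists: "\<exists>W. maximal_zero_subspace T PP W \<and> VS \<subseteq> W"
proof -
  define A where "A = {U. zero_subspace T PP U \<and> VS \<subseteq> U}"
  have "\<exists>M\<in>A. \<forall>X\<in>A. M \<subseteq> X \<longrightarrow> X = M"
  proof (rule subset_Zorn_nonempty)
    show "A \<noteq> {}" using VS_zero unfolding A_def by blast
  next
    fix C assume C: "C \<noteq> {}" "subset.chain A C"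
    have CA: "C \<subseteq> A" and ch: "\<forall>X\<in>C. \<forall>Y\<in>C. X \<subseteq> Y \<or> Y \<subseteq> X"
      using C(2) unfolding subset_chain_def by auto
    obtain U0 where U0: "U0 \<in> C" using C(1) by blast
    have zs: "zero_subspace T PP U" "VS \<subseteq> U" if "U \<in> C" for U using that CA unfolding A_def by auto
    have "l1_subspace T (\<Union>C)"
      unfolding l1_subspace_def
    proof (intro conjI ballI allI)
      show "\<Union>C \<subseteq> l1 T" using zs unfolding zero_subspace_def l1_subspace_def by blast
      show "(\<lambda>i. 0) \<in> \<Union>C" using zs[OF U0] U0 unfolding zero_subspace_def l1_subspace_def by blast
    next
      fix x y a b assume x: "x \<in> \<Union>C" and y: "y \<in> \<Union>C"
      then obtain X Y where XY: "X \<in> C" "Y \<in> C" "x \<in> X" "y \<in> Y" by blast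
      show "(\<lambda>i. a * x i + b * y i) \<in> \<Union>C"
      proof (cases "X \<subseteq> Y")
        case True
        thus ?thesis using zs(1)[OF XY(2)] XY unfolding zero_subspace_def l1_subspace_def by blast
      next
        case False
        hence "Y \<subseteq> X" using ch XY by blast
        thus ?thesis using zs(1)[OF XY(1)] XY unfolding zero_subspace_def l1_subspace_def by blast
      qed
    qed
    moreover have "\<forall>v\<in>\<Union>C. PP v = 0" using zs unfolding zero_subspace_def by blast
    moreover have "VS \<subseteq> \<Union>C" using zs(2)[OF U0] U0 by blast
    ultimately show "\<Union>C \<in> A" unfolding A_def zero_subspace_def by blast
  qed
  then obtain W where W: "W \<in> A" "\<forall>X\<in>A. W \<subseteq> X \<longrightarrow> X = W" by blast
  have "maximal_zero_subspace T PP W"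
    unfolding maximal_zero_subspace_def
  proof (intro conjI allI impI)
    show "zero_subspace T PP W" using W(1) unfolding A_def by blast
    fix X assume "zero_subspace T PP X \<and> W \<subseteq> X"
    moreover hence "X \<in> A" using W(1) unfolding A_def by blast
    ultimately show "X = W" using W(2) by blast
  qed
  thus ?thesis using W(1) unfolding A_def by blast
qed

end




context constr begin

lemma ev_VR: "r \<in> R \<Longrightarrow> ev r \<in> VR"
  unfolding VR_def using ev_l1[of r T] RT RS by (auto simp: ev_def)

lemma ev_VS: "s \<in> S \<Longrightarrow> ev s \<in> VS"
  unfolding VS_def using ev_l1[of s T] ST RS by (auto simp: ev_def)

lemma VR_density:
  assumes inf: "infinite R" and iso: "|R| =o |X|"
  shows "has_density T VR X"
proof (rule dens_main[OF _ RT _ DD_l1[OF RT] _ inf DD_card[OF inf] iso])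
  show "VR \<subseteq> l1 T" unfolding VR_def by auto
  show "\<forall>a\<in>R. ev a \<in> VR" using ev_VR by blast
  show "\<forall>v\<in>VR. \<forall>e>0. \<exists>d\<in>DD R. l1norm T (\<lambda>i. v i - d i) < e"
  proof (intro ballI allI impI)
    fix v e assume v: "v \<in> VR" and e: "(e::real) > 0"
    have vl: "v \<in> l1 T" using v unfolding VR_def by auto
    have "\<forall>i. i \<notin> R \<longrightarrow> v i = 0" using v Sdef unfolding VR_def l1_def by auto
    thus "\<exists>d\<in>DD R. l1norm T (\<lambda>i. v i - d i) < e" using DD_appr[OF vl RT _ e] by blast
  qed
qed

lemma W_density:
  assumes W: "maximal_zero_subspace T PP W" "VS \<subseteq> W"
    and inf: "infinite S" and iso: "|S| =o |T|"
  shows "has_density T W T"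
proof -
  have infT: "infinite T" using inf ST finite_subset by blast
  have Wl: "W \<subseteq> l1 T" using W unfolding maximal_zero_subspace_def zero_subspace_def l1_subspace_def by blast
  have c: "|DD T| \<le>o |S|" using ordLeq_ordIso_trans[OF DD_card[OF infT] ordIso_symmetric[OF iso]] .
  show ?thesis
  proof (rule dens_main[OF Wl ST _ DD_l1[OF order_refl] _ inf c iso])
    show "\<forall>a\<in>S. ev a \<in> W" using ev_VS W(2) by blast
    show "\<forall>v\<in>W. \<forall>e>0. \<exists>d\<in>DD T. l1norm T (\<lambda>i. v i - d i) < e"
    proof (intro ballI allI impI)
      fix v e assume v: "v \<in> W" and e: "(e::real) > 0"
      have vl: "v \<in> l1 T" using v Wl by auto
      have "\<forall>i. i \<notin> T \<longrightarrow> v i = 0" using vl unfolding l1_def by auto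
      thus "\<exists>d\<in>DD T. l1norm T (\<lambda>i. v i - d i) < e" using DD_appr[OF vl order_refl _ e] by blast
    qed
  qed
qed

lemma result:
  assumes infR: "infinite R" and isoR: "|R| =o |K'|" and infS: "infinite S" and isoS: "|S| =o |T|"
  shows "\<exists>P. cont_quad_poly T P \<and>
           (\<exists>V. maximal_zero_subspace T P V \<and> has_density T V K') \<and>
           (\<exists>W. maximal_zero_subspace T P W \<and> has_density T W T)"
proof -
  obtain W where W: "maximal_zero_subspace T PP W" "VS \<subseteq> W" using W_exists by blast
  show ?thesis
    using cqp VR_max VR_density[OF infR isoR] W W_density[OF W infS isoS] by blast
qed

end

lemma Func_Pow:
  assumes inf: "infinite K"
  shows "|Func (UNIV :: nat set) K| \<le>o |Pow K|"
proof -
  have "|(UNIV :: nat set)| \<le>o |K|" using inf infinite_iff_card_of_nat by blast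
  hence "|(UNIV :: nat set) \<times> K| =o |K|" using card_of_Times_infinite[OF inf] by blast
  then obtain h where h: "bij_betw h ((UNIV :: nat set) \<times> K) K" using card_of_ordIso by blast
  define g where "g = (\<lambda>f. (\<lambda>n. h (n, f n)) ` (UNIV :: nat set))"
  have "inj_on g (Func UNIV K)"
  proof (rule inj_onI)
    fix f1 f2 assume f1: "f1 \<in> Func UNIV K" and f2: "f2 \<in> Func UNIV K" and eq: "g f1 = g f2"
    show "f1 = f2"
    proof
      fix n
      have "h (n, f1 n) \<in> g f2" using eq unfolding g_def by auto
      then obtain m where m: "h (n, f1 n) = h (m, f2 m)" unfolding g_def by auto
      have "(n, f1 n) \<in> UNIV \<times> K" "(m, f2 m) \<in> UNIV \<times> K" using f1 f2 unfolding Func_def by auto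
      hence "(n, f1 n) = (m, f2 m)" using m h unfolding bij_betw_def inj_on_def by blast
      thus "f1 n = f2 n" by auto
    qed
  qed
  moreover have "g ` Func UNIV K \<subseteq> Pow K"
    using h unfolding g_def Func_def bij_betw_def by auto
  ultimately show ?thesis unfolding card_of_ordLeq[symmetric] by blast
qed




theorem mainTheorem2:
  fixes K :: "'k set" and T :: "'t set"
  assumes "infinite K"
    and "(card_of (Func (UNIV :: nat set) K), cardSuc (card_of K)) \<in> ordLeq
           \<longrightarrow> (card_of T, cardSuc (card_of K)) \<in> ordIso"
    and "(cardSuc (card_of K), card_of (Func (UNIV :: nat set) K)) \<in> ordLeq
           \<longrightarrow> (card_of T, card_of (Func (UNIV :: nat set) K)) \<in> ordIso"
  shows "\<exists>P. cont_quad_poly T P \<and>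
           (\<exists>V. maximal_zero_subspace T P V \<and> has_density T V K) \<and>
           (\<exists>W. maximal_zero_subspace T P W \<and> has_density T W T)"
proof -
  note inf = assms(1)
  have cK: "Card_order (card_of K)" by (rule card_of_Card_order)
  have cs: "Card_order (cardSuc (card_of K))" by (rule cardSuc_Card_order[OF cK])
  have wcs: "Well_order (cardSuc (card_of K))" using cs card_order_on_well_order_on by blast
  have wF: "Well_order (card_of (Func (UNIV :: nat set) K))" by (rule card_of_Well_order)
  have csP: "cardSuc (card_of K) \<le>o |Pow K|"
    using cardSuc_ordLess_ordLeq[OF cK card_of_Card_order] card_of_Pow by blast
  have FP: "|Func (UNIV :: nat set) K| \<le>o |Pow K|" by (rule Func_Pow[OF inf])
  have "cardSuc (card_of K) \<le>o |T| \<and> |T| \<le>o |Pow K|"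
  proof -
    have "|Func (UNIV :: nat set) K| \<le>o cardSuc (card_of K) \<or> cardSuc (card_of K) \<le>o |Func (UNIV :: nat set) K|"
      using ordLeq_total[OF wF wcs] .
    thus ?thesis
    proof (elim disjE)
      assume a: "|Func (UNIV :: nat set) K| \<le>o cardSuc (card_of K)"
      hence i: "|T| =o cardSuc (card_of K)" using assms(2) by blast
      have "cardSuc (card_of K) \<le>o |T|" using ordIso_symmetric[OF i] unfolding ordIso_iff_ordLeq by blast
      moreover have "|T| \<le>o |Pow K|" by (rule ordIso_ordLeq_trans[OF i csP])
      ultimately show ?thesis ..
    next
      assume a: "cardSuc (card_of K) \<le>o |Func (UNIV :: nat set) K|"
      hence i: "|T| =o |Func (UNIV :: nat set) K|" using assms(3) by blast
      have "cardSuc (card_of K) \<le>o |T|" by (rule ordLeq_ordIso_trans[OF a ordIso_symmetric[OF i]])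
      moreover have "|T| \<le>o |Pow K|" by (rule ordIso_ordLeq_trans[OF i FP])
      ultimately show ?thesis ..
    qed
  qed
  hence csT: "cardSuc (card_of K) \<le>o |T|" and TP: "|T| \<le>o |Pow K|" by auto
  have KT: "|K| <o |T|" by (rule ordLess_ordLeq_trans[OF cardSuc_greater[OF cK] csT])
  have infT: "infinite T" using card_of_ordLeq_infinite[OF ordLess_imp_ordLeq[OF KT] inf] .
  define Lr where "Lr = lists (K \<times> (UNIV :: bool set))"
  have boolK: "|(UNIV :: bool set)| \<le>o |K|"
  proof -
    have "|(UNIV :: bool set)| \<le>o |(UNIV :: nat set)|"
      unfolding card_of_ordLeq[symmetric]
      by (rule exI[of _ "\<lambda>b. if b then (1::nat) else 0"]) (auto simp: inj_on_def)
    also have "|(UNIV :: nat set)| \<le>o |K|" using inf infinite_iff_card_of_nat by blast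
    finally show ?thesis .
  qed
  have infKB: "infinite (K \<times> (UNIV :: bool set))" using inf finite_cartesian_productD1 by blast
  have LrK1: "|Lr| \<le>o |K|"
  proof -
    have "|Lr| \<le>o |K \<times> (UNIV :: bool set)|" unfolding Lr_def by (rule lists_card[OF infKB])
    also have "|K \<times> (UNIV :: bool set)| \<le>o |K|"
      using card_of_Times_infinite[OF inf _ boolK] unfolding ordIso_iff_ordLeq by blast
    finally show ?thesis .
  qed
  have LrK2: "|K| \<le>o |Lr|"
    unfolding card_of_ordLeq[symmetric] Lr_def
    by (rule exI[of _ "\<lambda>k. [(k, True)]"]) (auto simp: inj_on_def)
  have LrK: "|Lr| =o |K|" using LrK1 LrK2 unfolding ordIso_iff_ordLeq by blast
  have "|Lr| \<le>o |T|" using ordLeq_transitive[OF LrK1 ordLess_imp_ordLeq[OF KT]] .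
  then obtain j where j: "inj_on j Lr" "j ` Lr \<subseteq> T" unfolding card_of_ordLeq[symmetric] by blast
  define R where "R = j ` Lr"
  define \<rho> where "\<rho> = inv_into Lr j"
  define S where "S = T - R"
  have RT: "R \<subseteq> T" using j unfolding R_def by blast
  have surj: "\<forall>L\<in>lists (K \<times> UNIV). \<exists>r\<in>R. \<rho> r = L"
  proof
    fix L assume "L \<in> lists (K \<times> (UNIV :: bool set))"
    hence L: "L \<in> Lr" unfolding Lr_def .
    show "\<exists>r\<in>R. \<rho> r = L" using L j(1) unfolding R_def \<rho>_def by (intro bexI[of _ "j L"]) auto
  qed
  have RLr: "|R| =o |Lr|"
  proof -
    have "bij_betw j Lr R" unfolding R_def using j(1) by (rule bij_betw_imageI) simp
    hence "|Lr| =o |R|" using card_of_ordIso by blast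
    thus ?thesis by (rule ordIso_symmetric)
  qed
  have RK: "|R| =o |K|" by (rule ordIso_transitive[OF RLr LrK])
  have infR: "infinite R"
  proof
    assume "finite R"
    moreover have "|K| \<le>o |R|" using ordIso_symmetric[OF RK] unfolding ordIso_iff_ordLeq by blast
    ultimately show False using card_of_ordLeq_infinite inf by blast
  qed
  have RlT: "|R| <o |T|" by (rule ordIso_ordLess_trans[OF RK KT])
  have ST1: "|S| \<le>o |T|" unfolding S_def by (rule card_of_mono1) blast
  have ST2: "|T| \<le>o |S|"
  proof (rule ccontr)
    assume "\<not> |T| \<le>o |S|"
    hence "|S| <o |T|" using not_ordLeq_iff_ordLess[OF card_of_Well_order card_of_Well_order] by blast
    hence "|R \<union> S| <o |T|" using card_of_Un_ordLess_infinite[OF infT RlT] by blast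
    moreover have "R \<union> S = T" unfolding S_def using RT by blast
    ultimately show False using ordLess_irreflexive by metis
  qed
  have STc: "|S| =o |T|" using ST1 ST2 unfolding ordIso_iff_ordLeq by blast
  have infS: "infinite S" using card_of_ordLeq_infinite[OF ST2 infT] .
  obtain \<iota> where \<iota>: "inj_on \<iota> T" "\<iota> ` T \<subseteq> Pow K" using TP unfolding card_of_ordLeq[symmetric] by blast
  interpret constr K T R S \<rho> \<iota>
  proof
    show "R \<subseteq> T" by (rule RT)
    show "S = T - R" by (rule S_def)
    show "inj_on \<iota> S" using \<iota>(1) by (rule inj_on_subset) (auto simp: S_def)
    show "\<forall>s\<in>S. \<iota> s \<subseteq> K" using \<iota>(2) by (auto simp: S_def)
    show "\<forall>L\<in>lists (K \<times> UNIV). \<exists>r\<in>R. \<rho> r = L" by (rule surj)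
  qed
  show ?thesis by (rule result[OF infR RK infS STc])
qed



end
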